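(* Let $H$ be a real Hilbert space, $I=\{1,\dots,M\}$, let $f_i,h_i,T_i$ ($i\in I$) satisfy Assumption (A1)–(A4) and the parameters satisfy Condition (C) (described below). Consider the sequences generated by the Distributed Accelerated Parallel Algorithm below, and assume that for each $i\in I$ the sequence $\{y^{(i)}_n\}$ is bounded. Then for each $i\in I$, $$\lim_{n\to\infty}\|z_n-y^{(i)}_n\|=\lim_{n\to\infty}\|x_n-y^{(i)}_n\|=\lim_{n\to\infty}\|T_i(x_n)-x_n\|=0.$$
   Context: Assumption (A1): each $f_i:H\to\mathbb{R}$ is continuous and convex. (A2): each $h_i:H\to\mathbb{R}$ is convex and Fréchet differentiable, and $\nabla h_i$ is $(1/L_i)$-Lipschitz continuous for some $L_i>0$. (A3): each $T_i:H\to H$ is firmly nonexpansive, i.e. $\|T_ix-T_iy\|^2\le\langle T_ix-T_iy,x-y\rangle$ for all $x,y$. (A4): $S=\bigcap_{i=1}^M\mathrm{Fix}\,T_i\neq\emptyset$ and, with $\psi=\sum_{i=1}^M(f_i+h_i)$, $\Omega=\{\hat x\in S:\psi(\hat x)=\min_{x\in S}\psi(x)\}\neq\emptyset$. Condition (C): $\{\theta_n\},\{\lambda_n\},\{\beta_n\},\{\alpha_n\}$ are decreasing real sequences converging to $0$ with $\theta_n\in[0,1)$, $\lambda_n\in(0,2\min_{i\in I}L_i]$, $\beta_n\in(0,1]$, $\alpha_n\in(0,1]$, and: (C1) $\sum_n\alpha_n=\infty$; (C2) $\lim_n\frac{1}{\alpha_{n+1}}\big|\frac{1}{\lambda_{n+1}}-\frac{1}{\lambda_n}\big|=0$;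 (C3) $\lim_n\frac{1}{\lambda_{n+1}}\big|1-\frac{\alpha_n}{\alpha_{n+1}}\big|=0$; (C4) $\lim_n\frac{\alpha_n}{\lambda_n}=0$; (C5) $\lim_n\frac{\theta_n}{\alpha_{n+1}\lambda_{n+1}}=0$; (C6) $\frac{\lambda_n}{\lambda_{n+1}}\le\sigma$ for some $\sigma\ge1$; (C7) $\lim_n\frac{\beta_n}{\alpha_{n+1}}=0$. $\mathrm{prox}_{\lambda g}(x)=\arg\min_y\{g(y)+\frac{1}{2\lambda}\|x-y\|^2\}$. Distributed Accelerated Parallel Algorithm: choose $z_0,x_0,x_1\in H$, $u^{(i)}\in H$ and set $d^{(i)}_1=-\nabla h_i(z_0)$ ($i\in I$). For $n=1,2,\dots$: compute $z_n=x_n+\theta_n(x_n-x_{n-1})$; for $i=1,\dots,M$ compute $d^{(i)}_{n+1}=-\nabla h_i(z_n)+\beta_nd^{(i)}_n$, $y^{(i)}_n=\mathrm{prox}_{\lambda_nf_i}(z_n+\lambda_nd^{(i)}_{n+1})$, $w^{(i+1)}_n=\alpha_nu^{(i)}+(1-\alpha_n)T_i(y^{(i)}_n)$; then set $x_{n+1}=\frac1M\sum_{i=1}^Mw^{(i+1)}_n$. *)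

theory Defs
  imports "HOL-Analysis.Analysis"
begin

definition prox :: "real \<Rightarrow> ('a::real_inner \<Rightarrow> real) \<Rightarrow> 'a \<Rightarrow> 'a" where
  "prox lam g x = (THE y. \<forall>v. g y + (1 / (2 * lam)) * (norm (x - y))\<^sup>2
                              \<le> g v + (1 / (2 * lam)) * (norm (x - v))\<^sup>2)"

definition firmly_nonexpansive :: "('a::real_inner \<Rightarrow> 'a) \<Rightarrow> bool" where
  "firmly_nonexpansive T \<longleftrightarrow> (\<forall>x y. (norm (T x - T y))\<^sup>2 \<le> inner (T x - T y) (x - y))"

end

theory Submission
  imports Defs
begin



lemma grad_ineq:
  fixes h :: "'a::real_inner \<Rightarrow> real"
  assumes cv: "convex_on UNIV h"
    and der: "\<And>v. (h has_derivative (\<lambda>t. inner (g v) t)) (at v)"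
  shows "h x + inner (g x) (y - x) \<le> h y"
proof -
  define k where "k = (\<lambda>t::real. h (x + t *\<^sub>R (y - x)))"
  have kc: "convex_on UNIV k"
  proof (rule convex_onI)
    fix t a b :: real assume t: "0 < t" "t < 1"
    have "x + ((1 - t) * a + t * b) *\<^sub>R (y - x) = (1 - t) *\<^sub>R (x + a *\<^sub>R (y - x)) + t *\<^sub>R (x + b *\<^sub>R (y - x))"
      by (simp add: algebra_simps)
    then show "k ((1 - t) *\<^sub>R a + t *\<^sub>R b) \<le> (1 - t) * k a + t * k b"
      unfolding k_def using convex_onD[OF cv, of t] t by simp
  qed auto
  have kd: "(k has_field_derivative inner (g x) (y - x)) (at 0)"
  proof -
    have "((\<lambda>t. x + t *\<^sub>R (y - x)) has_derivative (\<lambda>s. s *\<^sub>R (y - x))) (at 0)"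
      by (auto intro!: derivative_eq_intros)
    from has_derivative_compose[OF this der[of "x + 0 *\<^sub>R (y - x)"]]
    have "(k has_derivative (\<lambda>s. inner (g x) (s *\<^sub>R (y - x)))) (at 0)"
      by (simp add: k_def o_def)
    then show ?thesis unfolding has_field_derivative_def
      by (simp add: mult.commute[of _ "inner (g x) (y - x)"])
  qed
  have "k 1 - k 0 \<ge> inner (g x) (y - x) * (1 - 0)"
    by (rule convex_on_imp_above_tangent[OF kc]) (use kd in auto)
  then show ?thesis by (simp add: k_def)
qed

lemma descent:
  fixes h :: "'a::real_inner \<Rightarrow> real"
  assumes der: "\<And>v. (h has_derivative (\<lambda>t. inner (g v) t)) (at v)"
    and lip: "\<And>a b. norm (g a - g b) \<le> C * norm (a - b)" and C: "C \<ge> 0"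
  shows "h (u + v) \<le> h u + inner (g u) v + C * (norm v)\<^sup>2"
proof (cases "v = 0")
  case True then show ?thesis by simp
next
  case False
  define k where "k = (\<lambda>t::real. h (u + t *\<^sub>R v))"
  have kd: "(k has_derivative (\<lambda>s. s * inner (g (u + t *\<^sub>R v)) v)) (at t within {0..1})" for t
  proof -
    have "((\<lambda>t. u + t *\<^sub>R v) has_derivative (\<lambda>s. s *\<^sub>R v)) (at t within {0..1})"
      by (auto intro!: derivative_eq_intros)
    from has_derivative_in_compose[OF this has_derivative_at_withinI[OF der[of "u + t *\<^sub>R v"]]]
    show ?thesis by (simp add: k_def o_def)
  qed
  obtain t where t: "t \<in> {0<..<1}" and eq: "k 1 - k 0 = (1 - 0) * inner (g (u + t *\<^sub>R v)) v"
    using mvt_simple[of 0 1 k "\<lambda>t s. s * inner (g (u + t *\<^sub>R v)) v", OF _ kd] by auto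
  have "inner (g (u + t *\<^sub>R v)) v = inner (g u) v + inner (g (u + t *\<^sub>R v) - g u) v"
    by (simp add: inner_diff_left)
  also have "inner (g (u + t *\<^sub>R v) - g u) v \<le> norm (g (u + t *\<^sub>R v) - g u) * norm v"
    by (rule norm_cauchy_schwarz)
  also have "\<dots> \<le> C * norm (t *\<^sub>R v) * norm v"
    using lip[of "u + t *\<^sub>R v" u] by (simp add: mult_right_mono)
  also have "\<dots> \<le> C * norm v * norm v"
    using t C by (auto intro!: mult_right_mono mult_left_mono simp: mult_left_le_one_le)
  finally show ?thesis using eq by (simp add: k_def power2_eq_square mult.assoc)
qed

lemma cocoercive:
  fixes h :: "'a::real_inner \<Rightarrow> real"
  assumes cv: "convex_on UNIV h"
    and der: "\<And>v. (h has_derivative (\<lambda>t. inner (g v) t)) (at v)"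
    and lip: "\<And>a b. norm (g a - g b) \<le> (1 / L) * norm (a - b)" and L: "L > 0"
  shows "inner (g a - g b) (a - b) \<ge> (L / 2) * (norm (g a - g b))\<^sup>2"
proof -
  have key: "h y \<ge> h x + inner (g x) (y - x) + (L / 4) * (norm (g y - g x))\<^sup>2" for x y
  proof -
    define v where "v = - (L / 2) *\<^sub>R (g y - g x)"
    have d: "h (y + v) \<le> h y + inner (g y) v + (1 / L) * (norm v)\<^sup>2"
      by (rule descent[OF der lip]) (use L in simp)
    have gi: "h x + inner (g x) ((y + v) - x) \<le> h (y + v)"
      by (rule grad_ineq[OF cv der])
    have nv: "(norm v)\<^sup>2 = (L/2)^2 * (norm (g y - g x))\<^sup>2"
      using L by (simp add: v_def power_mult_distrib power2_eq_square)
    have i1: "inner (g y) v - inner (g x) v = - (L/2) * (norm (g y - g x))\<^sup>2"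
      by (simp add: v_def power2_norm_eq_inner inner_diff_left inner_diff_right algebra_simps)
    have "h x + inner (g x) (y - x) + inner (g x) v \<le> h y + inner (g y) v + (1 / L) * (norm v)\<^sup>2"
      using d gi by (simp add: inner_add_right inner_diff_right algebra_simps)
    then have "h x + inner (g x) (y - x) \<le> h y - (L/2) * (norm (g y - g x))\<^sup>2 + (1/L) * ((L/2)^2 * (norm (g y - g x))\<^sup>2)"
    proof -
      have "1 / L * (norm v)\<^sup>2 = 1 / L * ((L/2)^2 * (norm (g y - g x))\<^sup>2)" using nv by simp
      then show ?thesis using i1 \<open>h x + inner (g x) (y - x) + inner (g x) v \<le> _\<close> by linarith
    qed
    moreover have "(1/L) * ((L/2)^2 * (norm (g y - g x))\<^sup>2) = (L/4) * (norm (g y - g x))\<^sup>2"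
      using L by (simp add: power2_eq_square field_simps)
    ultimately show ?thesis by linarith
  qed
  have "(norm (g b - g a)) = norm (g a - g b)" by (simp add: norm_minus_commute)
  with key[of a b] key[of b a] show ?thesis
    by (simp add: inner_diff_left inner_diff_right inner_commute algebra_simps)
qed

lemma fb_nonexp:
  fixes h :: "'a::real_inner \<Rightarrow> real"
  assumes cv: "convex_on UNIV h"
    and der: "\<And>v. (h has_derivative (\<lambda>t. inner (g v) t)) (at v)"
    and lip: "\<And>a b. norm (g a - g b) \<le> (1 / L) * norm (a - b)" and L: "L > 0"
    and lam: "0 \<le> lam" "lam \<le> L"
  shows "norm ((a - lam *\<^sub>R g a) - (b - lam *\<^sub>R g b)) \<le> norm (a - b)"
proof -
  have c: "inner (g a - g b) (a - b) \<ge> (L / 2) * (norm (g a - g b))\<^sup>2"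
    by (rule cocoercive[OF cv der lip L])
  have e: "(a - lam *\<^sub>R g a) - (b - lam *\<^sub>R g b) = (a - b) - lam *\<^sub>R (g a - g b)"
    by (simp add: algebra_simps)
  have "(norm ((a - b) - lam *\<^sub>R (g a - g b)))\<^sup>2 = (norm (a - b))\<^sup>2 - 2 * lam * inner (g a - g b) (a - b) + lam^2 * (norm (g a - g b))\<^sup>2"
    unfolding power2_norm_eq_inner
    by (simp add: inner_diff_left inner_diff_right inner_commute algebra_simps power2_eq_square)
  also have "\<dots> \<le> (norm (a - b))\<^sup>2 - lam * L * (norm (g a - g b))\<^sup>2 + lam^2 * (norm (g a - g b))\<^sup>2"
    using mult_left_mono[OF c, of "2*lam"] lam by (simp add: algebra_simps)
  also have "\<dots> \<le> (norm (a - b))\<^sup>2"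
  proof -
    have "lam^2 \<le> lam * L" using lam by (simp add: power2_eq_square mult_left_mono)
    then show ?thesis by (simp add: mult_right_mono)
  qed
  finally have "norm ((a - b) - lam *\<^sub>R (g a - g b)) \<le> norm (a - b)"
    by (simp add: power2_le_iff_abs_le)
  then show ?thesis using e by metis
qed

lemma convex_lower_linear:
  fixes f :: "'a::real_normed_vector \<Rightarrow> real"
  assumes c: "continuous_on UNIV f" and cv: "convex_on UNIV f"
  shows "\<exists>A B. B \<ge> 0 \<and> (\<forall>y. f y \<ge> A - B * norm y)"
proof -
  have "isCont f 0" using c by (simp add: continuous_on_eq_continuous_at)
  then have "\<forall>e>0. \<exists>d>0. \<forall>y. dist y 0 < d \<longrightarrow> dist (f y) (f 0) < e"
    by (simp only: continuous_at_eps_delta)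
  then have "\<exists>d>0. \<forall>y. dist y 0 < d \<longrightarrow> dist (f y) (f 0) < 1"
  proof -
    assume h: "\<forall>e>0. \<exists>d>0. \<forall>y. dist y 0 < d \<longrightarrow> dist (f y) (f 0) < e"
    have "(1::real) > 0 \<longrightarrow> (\<exists>d>0. \<forall>y. dist y 0 < d \<longrightarrow> dist (f y) (f 0) < 1)"
      using h by (rule spec)
    then show ?thesis by simp
  qed
  then obtain r where r: "r > 0" and hr0: "\<forall>y. dist y 0 < r \<longrightarrow> dist (f y) (f 0) < 1"
    by blast
  have hr: "f q < f 0 + 1" if "norm q < r" for q
  proof -
    have "dist (f q) (f 0) < 1" using hr0 that by (simp add: dist_norm)
    then show ?thesis by (simp add: dist_real_def abs_less_iff)
  qed
  have "f y \<ge> f 0 - (2 / r) * (norm y + 1)" for y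
  proof -
    define k where "k = r / (2 * (norm y + 1))"
    have pos2: "2 * (norm y + 1) > 0" using norm_ge_zero[of y] by argo
    then have k: "k > 0" using r unfolding k_def by (rule divide_pos_pos[rotated])
    define s where "s = k / (1 + k)"
    have s: "0 < s" "s < 1" using k by (auto simp: s_def)
    have "norm (- k *\<^sub>R y) < r"
    proof -
      have "norm (- k *\<^sub>R y) = k * norm y" using k by simp
      also have "\<dots> < k * (2 * (norm y + 1))"
      proof -
        have "norm y < 2 * (norm y + 1)" using norm_ge_zero[of y] by argo
        then show ?thesis using k by (rule mult_strict_left_mono)
      qed
      also have "\<dots> = r" using pos2 by (simp add: k_def)
      finally show ?thesis .
    qed
    then have fq: "f (- k *\<^sub>R y) < f 0 + 1" by (rule hr)
    have e0: "(1 - (1 - s)) *\<^sub>R y + (1 - s) *\<^sub>R (- k *\<^sub>R y) = 0"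
    proof -
      have "s - (1 - s) * k = 0" using k by (simp add: s_def field_simps)
      then have "(s - (1 - s) * k) *\<^sub>R y = 0" by simp
      then show ?thesis by (simp add: algebra_simps)
    qed
    have "f ((1 - (1 - s)) *\<^sub>R y + (1 - s) *\<^sub>R (- k *\<^sub>R y)) \<le> (1 - (1 - s)) * f y + (1 - s) * f (- k *\<^sub>R y)"
      using s by (intro convex_onD[OF cv]) auto
    then have "f 0 \<le> (1 - (1 - s)) * f y + (1 - s) * f (- k *\<^sub>R y)"
      unfolding e0 .
    also have "\<dots> \<le> s * f y + (1 - s) * (f 0 + 1)"
      using fq s by (simp add: mult_left_mono)
    finally have "s * f 0 - (1 - s) \<le> s * f y" by (simp add: algebra_simps)
    then have "f 0 - (1 - s) / s \<le> f y" using s by (simp add: field_simps)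
    moreover have "(1 - s) / s = 1 / k" using k by (simp add: s_def field_simps)
    moreover have "1 / k = (2 / r) * (norm y + 1)" using r by (simp add: k_def)
    ultimately show ?thesis by simp
  qed
  moreover have "f 0 - (2 / r) * (norm y + 1) = (f 0 - 2 / r) - (2 / r) * norm y" for y
    by (simp add: distrib_left)
  ultimately have "\<forall>y. f y \<ge> (f 0 - 2 / r) - (2 / r) * norm y" by metis
  moreover have "2 / r \<ge> 0" using r by simp
  ultimately show ?thesis by blast
qed

lemma norm_diff_scale_sq:
  fixes A B :: "'a::real_inner"
  shows "(norm (A - t *\<^sub>R B))\<^sup>2 = (norm A)\<^sup>2 - 2 * t * inner A B + t\<^sup>2 * (norm B)\<^sup>2"
  unfolding power2_norm_eq_inner
  by (simp add: inner_diff_left inner_diff_right inner_commute algebra_simps power2_eq_square)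

lemma parallelogram_half:
  fixes A B :: "'a::real_inner"
  shows "(norm ((1/2) *\<^sub>R (A + B)))\<^sup>2 = ((norm A)\<^sup>2 + (norm B)\<^sup>2) / 2 - (norm (B - A))\<^sup>2 / 4"
  unfolding power2_norm_eq_inner
  by (simp add: inner_diff_left inner_diff_right inner_add_left inner_add_right inner_commute algebra_simps add_divide_distrib diff_divide_distrib)

lemma parallelogram_mid:
  fixes x a b :: "'a::real_inner"
  shows "(norm (x - (1/2) *\<^sub>R (a + b)))\<^sup>2 = ((norm (x - a))\<^sup>2 + (norm (x - b))\<^sup>2) / 2 - (norm (a - b))\<^sup>2 / 4"
proof -
  have hx: "(1/2::real) *\<^sub>R x + (1/2) *\<^sub>R x = x" by (simp flip: scaleR_add_left)
  have "x - (1/2) *\<^sub>R (a + b) = (1/2) *\<^sub>R ((x - a) + (x - b))"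
    by (simp add: algebra_simps hx)
  moreover have "a - b = (x - b) - (x - a)" by simp
  ultimately show ?thesis using parallelogram_half[of "x - a" "x - b"] by simp
qed

lemma prox_min_exists:
  fixes f :: "'a::{real_inner, complete_space} \<Rightarrow> real"
  assumes c: "continuous_on UNIV f" and cv: "convex_on UNIV f" and lam: "lam > 0"
  shows "\<exists>!y. \<forall>v. f y + (1 / (2 * lam)) * (norm (x - y))\<^sup>2 \<le> f v + (1 / (2 * lam)) * (norm (x - v))\<^sup>2"
proof -
  define cc where "cc = 1 / (2 * lam)"
  have cc: "cc > 0" using lam by (simp add: cc_def)
  define F where "F = (\<lambda>y. f y + cc * (norm (x - y))\<^sup>2)"
  have mid: "F ((1/2) *\<^sub>R (a + b)) \<le> (F a + F b) / 2 - cc * (norm (a - b))\<^sup>2 / 4" for a b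
  proof -
    have "f ((1 - 1/2) *\<^sub>R a + (1/2) *\<^sub>R b) \<le> (1 - 1/2) * f a + (1/2) * f b"
      using convex_onD[OF cv, of "1/2" a b] by simp
    moreover have "(1 - 1/2) *\<^sub>R a + (1/2) *\<^sub>R b = (1/2) *\<^sub>R (a + b)" by (simp add: algebra_simps)
    ultimately have "f ((1/2) *\<^sub>R (a + b)) \<le> (f a + f b) / 2" by simp
    moreover have "cc * (((norm (x - a))\<^sup>2 + (norm (x - b))\<^sup>2) / 2 - (norm (a - b))\<^sup>2 / 4)
       = cc * (norm (x - a))\<^sup>2 / 2 + cc * (norm (x - b))\<^sup>2 / 2 - cc * (norm (a - b))\<^sup>2 / 4"
      by (simp add: algebra_simps)
    ultimately have "f ((1/2) *\<^sub>R (a + b)) + cc * (((norm (x - a))\<^sup>2 + (norm (x - b))\<^sup>2) / 2 - (norm (a - b))\<^sup>2 / 4)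
       \<le> (f a + cc * (norm (x - a))\<^sup>2 + (f b + cc * (norm (x - b))\<^sup>2)) / 2 - cc * (norm (a - b))\<^sup>2 / 4"
      by (simp add: add_divide_distrib diff_divide_distrib)
    then show ?thesis unfolding F_def parallelogram_mid .
  qed
  obtain A B where B: "B \<ge> 0" and AB: "\<And>y. f y \<ge> A - B * norm y"
    using convex_lower_linear[OF c cv] by blast
  have lowb: "F y \<ge> A - B * (norm x + B / cc)" for y
  proof (cases "norm y \<le> norm x + B / cc")
    case True
    have "cc * (norm (x - y))\<^sup>2 \<ge> 0" using cc by simp
    then have "F y \<ge> A - B * norm y" using AB[of y] by (simp add: F_def)
    moreover have "B * norm y \<le> B * (norm x + B / cc)" using True B by (simp add: mult_left_mono)
    ultimately show ?thesis by linarith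
  next
    case False
    have t: "norm (x - y) \<ge> norm y - norm x" by (metis norm_minus_commute norm_triangle_ineq2)
    have p: "norm y - norm x \<ge> B / cc" using False by simp
    have "B / cc \<ge> 0" using B cc by simp
    then have nn: "0 \<le> norm y - norm x" using p by linarith
    have "cc * (norm (x - y))\<^sup>2 \<ge> cc * ((norm y - norm x) * (norm y - norm x))"
    proof -
      have "(norm y - norm x) * (norm y - norm x) \<le> norm (x - y) * norm (x - y)"
        using t nn by (intro mult_mono) auto
      then show ?thesis using cc by (simp add: power2_eq_square)
    qed
    moreover have "cc * ((norm y - norm x) * (norm y - norm x)) \<ge> cc * ((B / cc) * (norm y - norm x))"
      using p cc B nn by (intro mult_left_mono mult_right_mono) auto
    moreover have "cc * ((B / cc) * (norm y - norm x)) = B * (norm y - norm x)" using cc by simp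
    ultimately have "F y \<ge> A - B * norm y + B * (norm y - norm x)" using AB[of y] by (simp add: F_def)
    moreover have "B * norm x \<le> B * (norm x + B / cc)" using B cc by (simp add: mult_left_mono)
    ultimately show ?thesis by (simp add: algebra_simps)
  qed
  define m where "m = Inf (range F)"
  have bdd: "bdd_below (range F)" using lowb by (auto intro!: bdd_belowI)
  have mle: "m \<le> F y" for y unfolding m_def by (rule cInf_lower[OF _ bdd]) auto
  have "\<exists>y. F y < m + 1 / (Suc k)" for k
  proof -
    have "Inf (range F) < m + 1 / Suc k" by (simp add: m_def)
    then show ?thesis using cInf_less_iff[OF _ bdd] by auto
  qed
  then obtain s where s: "\<And>k. F (s k) < m + 1 / (Suc k)" by metis
  have gen: "\<And>(Fm::real) Fa Fb c D j k. Fm \<le> (Fa+Fb)/2 - c * D/4 \<Longrightarrow> m \<le> Fm \<Longrightarrow> Fa < m + 1 / real (Suc j)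
        \<Longrightarrow> Fb < m + 1 / real (Suc k) \<Longrightarrow> c * D/4 \<le> (1 / real (Suc j)+1 / real (Suc k))/2"
    by argo
  have close: "cc * (norm (s j - s k))\<^sup>2 / 4 \<le> (1 / Suc j + 1 / Suc k) / 2" for j k
    by (rule gen[OF mid mle s s])
  have "Cauchy s"
  proof (rule metric_CauchyI)
    fix e :: real assume e: "e > 0"
    obtain N0 where N0: "4 / (cc * e\<^sup>2) < real N0"
      using reals_Archimedean2 by blast
    define N where "N = N0"
    have N: "4 / (cc * e\<^sup>2) < real (Suc N)" using N0 by (simp add: N_def)
    have "dist (s j) (s k) < e" if "j \<ge> N" "k \<ge> N" for j k
    proof -
      have "1 / real (Suc j) \<le> 1 / Suc N" "1 / real (Suc k) \<le> 1 / Suc N"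
        using that by (auto simp: frac_le)
      then have "cc * (norm (s j - s k))\<^sup>2 / 4 \<le> 1 / Suc N" using close[of j k] by simp
      then have "(norm (s j - s k))\<^sup>2 * (cc * real (Suc N)) \<le> 4" using cc by (simp add: field_simps)
      then have "(norm (s j - s k))\<^sup>2 \<le> 4 / (cc * Suc N)" using cc
        by (subst pos_le_divide_eq) auto
      also have "\<dots> < e\<^sup>2"
      proof -
        have "4 < real (Suc N) * (cc * e\<^sup>2)" using N cc e by (subst (asm) pos_divide_less_eq) auto
        moreover have pos: "0 < cc * real (Suc N)" using cc by simp
        ultimately show ?thesis by (simp only: pos_divide_less_eq[OF pos]) (simp add: algebra_simps)
      qed
      finally show ?thesis by (simp add: dist_norm power2_less_imp_less e less_imp_le)
    qed
    then show "\<exists>M. \<forall>m\<ge>M. \<forall>n\<ge>M. dist (s m) (s n) < e" by blast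
  qed
  then obtain ys where lim: "s \<longlonglongrightarrow> ys" using Cauchy_convergent_iff convergent_def by blast
  have Fc: "continuous_on UNIV F" unfolding F_def
    by (intro continuous_intros c)
  have "(\<lambda>k. F (s k)) \<longlonglongrightarrow> F ys"
    using continuous_on_tendsto_compose[OF Fc lim] by simp
  moreover have "(\<lambda>k. m + 1 / real (Suc k)) \<longlonglongrightarrow> m + 0"
    by (intro tendsto_intros LIMSEQ_inverse_real_of_nat[unfolded inverse_eq_divide])
  ultimately have "F ys \<le> m + 0"
  proof (rule LIMSEQ_le)
    show "\<exists>N. \<forall>n\<ge>N. F (s n) \<le> m + 1 / real (Suc n)"
      using s by (intro exI[of _ 0] allI impI less_imp_le) simp
  qed
  then have ymin: "\<forall>v. F ys \<le> F v" using mle by (metis add_0_right order_trans)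
  show ?thesis
  proof (rule ex1I[of _ ys])
    show "\<forall>v. f ys + (1 / (2 * lam)) * (norm (x - ys))\<^sup>2 \<le> f v + (1 / (2 * lam)) * (norm (x - v))\<^sup>2"
      using ymin by (simp add: F_def cc_def)
  next
    fix y assume "\<forall>v. f y + (1 / (2 * lam)) * (norm (x - y))\<^sup>2 \<le> f v + (1 / (2 * lam)) * (norm (x - v))\<^sup>2"
    then have ym: "\<forall>v. F y \<le> F v" by (simp add: F_def cc_def)
    have "cc * (norm (y - ys))\<^sup>2 / 4 \<le> 0"
      using mid[of y ys] spec[OF ym, of "(1/2) *\<^sub>R (y + ys)"] spec[OF ym, of ys] spec[OF ymin, of y] by argo
    then have "cc * (norm (y - ys))\<^sup>2 \<le> 0" by simp
    then have "(norm (y - ys))\<^sup>2 \<le> 0" using cc by (simp add: mult_le_0_iff)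
    then show "y = ys" by simp
  qed
qed

lemma prox_VI:
  fixes f :: "'a::{real_inner, complete_space} \<Rightarrow> real"
  assumes c: "continuous_on UNIV f" and cv: "convex_on UNIV f" and lam: "lam > 0"
  shows "inner (x - prox lam f x) (q - prox lam f x) \<le> lam * (f q - f (prox lam f x))"
proof -
  define y where "y = prox lam f x"
  define cc where "cc = 1 / (2 * lam)"
  have cc: "cc > 0" using lam by (simp add: cc_def)
  have ymin: "\<forall>v. f y + cc * (norm (x - y))\<^sup>2 \<le> f v + cc * (norm (x - v))\<^sup>2"
    unfolding y_def prox_def cc_def by (rule theI'[OF prox_min_exists[OF c cv lam]])
  define D where "D = 2 * cc * inner (x - y) (q - y) - (f q - f y)"
  define Q where "Q = cc * (norm (q - y))\<^sup>2"
  have Q: "Q \<ge> 0" using cc by (simp add: Q_def)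
  have Dt: "D \<le> t * Q" if t: "0 < t" "t \<le> 1" for t
  proof -
    define p where "p = (1 - t) *\<^sub>R y + t *\<^sub>R q"
    have fp: "f p \<le> (1 - t) * f y + t * f q" unfolding p_def using convex_onD[OF cv, of t y q] t by simp
    have np: "(norm (x - p))\<^sup>2 = (norm (x - y))\<^sup>2 - 2 * t * inner (x - y) (q - y) + t\<^sup>2 * (norm (q - y))\<^sup>2"
    proof -
      have "x - p = (x - y) - t *\<^sub>R (q - y)" by (simp add: p_def algebra_simps)
      then show ?thesis by (subst \<open>x - p = _\<close>) (rule norm_diff_scale_sq)
    qed
    have "f y + cc * (norm (x - y))\<^sup>2 \<le> f p + cc * (norm (x - p))\<^sup>2" using ymin by blast
    then have "f y + cc * (norm (x - y))\<^sup>2 \<le> (1 - t) * f y + t * f q + cc * ((norm (x - y))\<^sup>2 - 2 * t * inner (x - y) (q - y) + t\<^sup>2 * (norm (q - y))\<^sup>2)"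
      using fp np by simp
    then have "t * D \<le> t * (t * Q)"
      by (simp add: D_def Q_def algebra_simps power2_eq_square)
    then show ?thesis using t by simp
  qed
  have "D \<le> 0"
  proof (rule ccontr)
    assume "\<not> D \<le> 0"
    then have Dp: "D > 0" by simp
    define t where "t = min 1 (D / (2 * (Q + 1)))"
    have t: "0 < t" "t \<le> 1" using Dp Q by (auto simp: t_def)
    have "t \<le> D / (2 * (Q + 1))" by (simp add: t_def)
    then have "t * Q \<le> (D / (2 * (Q + 1))) * Q" using Q by (rule mult_right_mono)
    also have "\<dots> < D"
    proof -
      have "D * Q \<ge> 0" using Dp Q by simp
      then have "0 < D * Q + D * 2" using Dp by linarith
      then show ?thesis using Dp Q by (simp add: field_simps)
    qed
    finally show False using Dt[OF t] by simp
  qed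
  then have "2 * cc * inner (x - y) (q - y) \<le> f q - f y" by (simp add: D_def)
  then have "inner (x - y) (q - y) \<le> lam * (f q - f y)" using lam by (simp add: cc_def field_simps)
  then show ?thesis by (simp add: y_def)
qed




lemma fin_bound:
  fixes P :: "'i \<Rightarrow> 'n \<Rightarrow> real"
  assumes "finite I" "\<And>i. i \<in> I \<Longrightarrow> \<exists>B. \<forall>n\<in>S. P i n \<le> B"
  shows "\<exists>B. \<forall>i\<in>I. \<forall>n\<in>S. P i n \<le> B"
  using assms
proof (induction I rule: finite_induct)
  case empty then show ?case by simp
next
  case (insert j I)
  obtain B1 where B1: "\<forall>i\<in>I. \<forall>n\<in>S. P i n \<le> B1" using insert by auto
  obtain B2 where B2: "\<forall>n\<in>S. P j n \<le> B2" using insert.prems[of j] by blast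
  show ?case using B1 B2 by (intro exI[of _ "max B1 B2"]) (auto intro: max.coboundedI1 max.coboundedI2)
qed

lemma rec_bound:
  fixes r \<beta> :: "nat \<Rightarrow> real"
  assumes rec: "\<And>n. n \<ge> N \<Longrightarrow> r (Suc n) \<le> G + \<beta> n * r n"
    and b: "\<And>n. n \<ge> N \<Longrightarrow> 0 \<le> \<beta> n \<and> \<beta> n \<le> 1/2"
    and r0: "\<And>n. 0 \<le> r n" and G: "G \<ge> 0"
    and n: "n \<ge> N"
  shows "r n \<le> max (r N) (2 * G)"
  using n
proof (induction n rule: dec_induct)
  case base then show ?case by simp
next
  case (step n)
  have "\<beta> n * r n \<le> (1/2) * max (r N) (2 * G)"
    using b[OF step(1)] r0[of n] step(3) by (intro mult_mono) auto
  then have "r (Suc n) \<le> G + (1/2) * max (r N) (2 * G)" using rec[OF step(1)] by linarith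
  also have "\<dots> \<le> max (r N) (2 * G)" by (simp add: max_def)
  finally show ?case .
qed

lemma prox_diff:
  fixes v y v' y' :: "'a::real_inner"
  assumes lam: "lam > 0" and mu: "mu > 0"
    and VI1: "inner (v - y) (y' - y) \<le> lam * (F y' - F y)"
    and VI2: "inner (v' - y') (y - y') \<le> mu * (F y - F y')"
  shows "norm (y - y') \<le> norm (v - v') + \<bar>1 - lam / mu\<bar> * norm (v' - y')"
proof -
  define k where "k = lam / mu"
  have k: "k > 0" using lam mu by (simp add: k_def)
  have "k * inner (v' - y') (y - y') \<le> k * (mu * (F y - F y'))"
    using VI2 k by (simp add: mult_left_mono)
  also have "k * (mu * (F y - F y')) = lam * (F y - F y')" using mu by (simp add: k_def)
  finally have s: "inner (v - y) (y' - y) + k * inner (v' - y') (y - y') \<le> 0"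
    using VI1 by (simp add: algebra_simps)
  define E where "E = (v - v') + (1 - k) *\<^sub>R (v' - y')"
  have "inner E (y - y') - (norm (y - y'))\<^sup>2 = inner (v - y - k *\<^sub>R (v' - y')) (y - y')"
    unfolding E_def power2_norm_eq_inner
    by (simp add: inner_diff_left inner_diff_right inner_add_left algebra_simps)
  also have "\<dots> = - (inner (v - y) (y' - y) + k * inner (v' - y') (y - y'))"
    by (simp add: inner_diff_left inner_diff_right algebra_simps)
  finally have "(norm (y - y'))\<^sup>2 \<le> inner E (y - y')" using s by linarith
  also have "\<dots> \<le> norm E * norm (y - y')" by (rule norm_cauchy_schwarz)
  finally have q: "norm (y - y') * norm (y - y') \<le> norm E * norm (y - y')" by (simp add: power2_eq_square)
  have nE: "norm E \<le> norm (v - v') + \<bar>1 - k\<bar> * norm (v' - y')"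
    unfolding E_def by (rule order_trans[OF norm_triangle_ineq]) simp
  show ?thesis
  proof (cases "y = y'")
    case True then show ?thesis by simp
  next
    case False
    then have "norm (y - y') \<le> norm E" using q by simp
    then show ?thesis using nE k_def by simp
  qed
qed

lemma avg_sq:
  fixes a :: "'i \<Rightarrow> 'a::real_normed_vector"
  assumes "finite I" "card I = M" "M > 0"
  shows "(norm ((1 / real M) *\<^sub>R (\<Sum>i\<in>I. a i)))\<^sup>2 \<le> (1 / real M) * (\<Sum>i\<in>I. (norm (a i))\<^sup>2)"
proof -
  have "norm (\<Sum>i\<in>I. a i) \<le> (\<Sum>i\<in>I. norm (a i))" by (rule norm_sum)
  then have "(norm (\<Sum>i\<in>I. a i))\<^sup>2 \<le> (\<Sum>i\<in>I. norm (a i))\<^sup>2"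
    by (simp add: power_mono)
  also have "\<dots> \<le> (\<Sum>i\<in>I. (norm (a i))\<^sup>2) * real M"
    using sum_squared_le_sum_of_squares[of "\<lambda>i. norm (a i)" I] assms by simp
  finally have h: "(norm (\<Sum>i\<in>I. a i))\<^sup>2 \<le> (\<Sum>i\<in>I. (norm (a i))\<^sup>2) * real M" .
  have "(norm ((1 / real M) *\<^sub>R (\<Sum>i\<in>I. a i)))\<^sup>2 = (norm (\<Sum>i\<in>I. a i))\<^sup>2 / (real M)\<^sup>2"
    using assms by (simp add: power_divide)
  also have "\<dots> \<le> (\<Sum>i\<in>I. (norm (a i))\<^sup>2) * real M / (real M)\<^sup>2"
    using h by (simp add: divide_right_mono)
  also have "\<dots> = (1 / real M) * (\<Sum>i\<in>I. (norm (a i))\<^sup>2)"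
    using assms by (simp add: power2_eq_square)
  finally show ?thesis .
qed

lemma xu:
  fixes a b \<alpha> :: "nat \<Rightarrow> real"
  assumes a0: "\<And>n. n \<ge> Nz \<Longrightarrow> 0 \<le> a n"
    and al: "\<And>n. n \<ge> Nz \<Longrightarrow> 0 \<le> \<alpha> n \<and> \<alpha> n \<le> 1"
    and ns: "\<not> summable \<alpha>"
    and rec: "\<And>n. n \<ge> Nz \<Longrightarrow> a (Suc n) \<le> (1 - \<alpha> n) * a n + \<alpha> n * b n"
    and b: "b \<longlonglongrightarrow> 0"
  shows "a \<longlonglongrightarrow> 0"
proof (rule LIMSEQ_I)
  fix r :: real assume r: "r > 0"
  define e where "e = r / 3"
  have e: "e > 0" using r by (simp add: e_def)
  obtain N2 where N2: "\<forall>n\<ge>N2. norm (b n - 0) < e" using LIMSEQ_D[OF b e] by blast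
  define N1 where "N1 = max Nz N2"
  have bN: "b n \<le> e" if "n \<ge> N1" for n using N2 that by (auto simp: N1_def)
  define c where "c = max (a N1 - e) 0"
  define S where "S = (\<lambda>k. \<Sum>j<k. \<alpha> (N1 + j))"
  have P: "a (N1 + k) - e \<le> exp (- S k) * c" for k
  proof (induction k)
    case 0 then show ?case by (simp add: S_def c_def)
  next
    case (Suc k)
    have n: "N1 + k \<ge> Nz" by (simp add: N1_def)
    have alk: "0 \<le> \<alpha> (N1 + k)" "\<alpha> (N1 + k) \<le> 1" using al[OF n] by auto
    have "a (N1 + Suc k) - e \<le> (1 - \<alpha> (N1 + k)) * a (N1 + k) + \<alpha> (N1 + k) * e - e"
      using rec[OF n] bN[of "N1 + k"] alk by (simp add: mult_left_mono) (smt (verit) mult_left_mono)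
    also have "\<dots> = (1 - \<alpha> (N1 + k)) * (a (N1 + k) - e)" by (simp add: algebra_simps)
    also have "\<dots> \<le> (1 - \<alpha> (N1 + k)) * (exp (- S k) * c)"
      using Suc alk by (intro mult_left_mono) auto
    also have "\<dots> \<le> exp (- \<alpha> (N1 + k)) * (exp (- S k) * c)"
    proof (rule mult_right_mono)
      show "1 - \<alpha> (N1 + k) \<le> exp (- \<alpha> (N1 + k))" using exp_ge_add_one_self[of "- \<alpha> (N1 + k)"] by simp
      show "0 \<le> exp (- S k) * c" by (simp add: c_def)
    qed
    also have "\<dots> = exp (- S (Suc k)) * c" by (simp add: S_def exp_add[symmetric])
    finally show ?case by simp
  qed
  have ns': "\<not> summable (\<lambda>j. \<alpha> (N1 + j))"
    using ns summable_iff_shift[of \<alpha> N1] by (simp add: add.commute)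
  have nn: "0 \<le> \<alpha> (N1 + j)" for j using al[of "N1 + j"] by (simp add: N1_def)
  obtain k0 where k0: "S k0 > ln ((c + 1) / e)"
  proof -
    have "\<not> (\<forall>n. S n \<le> ln ((c + 1) / e))"
      using ns' summableI_nonneg_bounded[of "\<lambda>j. \<alpha> (N1 + j)"] nn by (auto simp: S_def)
    then show ?thesis using that by (meson not_le)
  qed
  have "\<forall>n\<ge>N1 + k0. norm (a n - 0) < r"
  proof (intro allI impI)
    fix n assume n: "n \<ge> N1 + k0"
    define k where "k = n - N1"
    have nk: "n = N1 + k" "k \<ge> k0" using n by (auto simp: k_def)
    have "S k0 \<le> S k" unfolding S_def using nk nn by (intro sum_mono2) auto
    then have "exp (- S k) \<le> exp (- S k0)" by simp
    also have "exp (- S k0) \<le> exp (- ln ((c + 1) / e))" using k0 by simp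
    also have "\<dots> = e / (c + 1)" using e by (simp add: c_def exp_minus add_pos_nonneg)
    finally have "exp (- S k) * c \<le> e / (c + 1) * c"
      by (rule mult_right_mono) (simp add: c_def)
    also have "\<dots> \<le> e" using e by (simp add: c_def field_simps)
    finally have "a n \<le> 2 * e" using P[of k] nk by simp
    moreover have "a n \<ge> 0" using a0[of n] n by (simp add: N1_def)
    ultimately show "norm (a n - 0) < r" using r by (simp add: e_def)
  qed
  then show "\<exists>no. \<forall>n\<ge>no. norm (a n - 0) < r" by blast
qed




lemma norm_add_sq:
  fixes A B :: "'a::real_inner"
  shows "(norm (A + B))\<^sup>2 = (norm A)\<^sup>2 + (norm B)\<^sup>2 + 2 * inner A B"
  unfolding power2_norm_eq_inner by (simp add: inner_add_left inner_add_right inner_commute)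

lemma sc2: fixes I C a :: real assumes "I \<le> C" "0 \<le> a" shows "2 * a * I \<le> a * (2 * C)"
proof -
  have "a * I \<le> a * C" using assms by (rule mult_left_mono)
  then show ?thesis by simp
qed

lemma sh:
  fixes a X S :: real
  assumes "0 \<le> S" "0 < a" "a \<le> 1"
  shows "(1 - a) * (X + S) \<le> (1 - a) * X + S"
proof -
  have "(1 - a) * S \<le> S" using assms by (intro mult_left_le_one_le) auto
  then show ?thesis by (simp add: distrib_left)
qed

theorem lemma7:
  fixes M :: nat
    and f h :: "nat \<Rightarrow> 'a::{real_inner, complete_space} \<Rightarrow> real"
    and grad :: "nat \<Rightarrow> 'a \<Rightarrow> 'a"
    and T :: "nat \<Rightarrow> 'a \<Rightarrow> 'a"
    and L :: "nat \<Rightarrow> real"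
    and \<theta> lam \<beta> \<alpha> :: "nat \<Rightarrow> real"
    and \<sigma> :: real
    and x z :: "nat \<Rightarrow> 'a"
    and u :: "nat \<Rightarrow> 'a"
    and d y w :: "nat \<Rightarrow> nat \<Rightarrow> 'a"
  assumes M: "M \<ge> 1"
    and A1: "\<And>i. i \<in> {1..M} \<Longrightarrow> continuous_on UNIV (f i) \<and> convex_on UNIV (f i)"
    and A2_convex: "\<And>i. i \<in> {1..M} \<Longrightarrow> convex_on UNIV (h i)"
    and A2_grad: "\<And>i v. i \<in> {1..M} \<Longrightarrow> (h i has_derivative (\<lambda>t. inner (grad i v) t)) (at v)"
    and A2_L: "\<And>i. i \<in> {1..M} \<Longrightarrow> L i > 0"
    and A2_lip: "\<And>i v v'. i \<in> {1..M} \<Longrightarrow> norm (grad i v - grad i v') \<le> (1 / L i) * norm (v - v')"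
    and A3: "\<And>i. i \<in> {1..M} \<Longrightarrow> firmly_nonexpansive (T i)"
    and A4_S: "(\<Inter>i\<in>{1..M}. {p. T i p = p}) \<noteq> {}"
    and A4_Omega: "\<exists>xh \<in> (\<Inter>i\<in>{1..M}. {p. T i p = p}).
                     \<forall>v \<in> (\<Inter>i\<in>{1..M}. {p. T i p = p}).
                       (\<Sum>i\<in>{1..M}. f i xh + h i xh) \<le> (\<Sum>i\<in>{1..M}. f i v + h i v)"
    and dec_\<theta>: "\<And>n. n \<ge> 1 \<Longrightarrow> \<theta> (Suc n) \<le> \<theta> n"
    and dec_lam: "\<And>n. n \<ge> 1 \<Longrightarrow> lam (Suc n) \<le> lam n"
    and dec_\<beta>: "\<And>n. n \<ge> 1 \<Longrightarrow> \<beta> (Suc n) \<le> \<beta> n"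
    and dec_\<alpha>: "\<And>n. n \<ge> 1 \<Longrightarrow> \<alpha> (Suc n) \<le> \<alpha> n"
    and lim_\<theta>: "\<theta> \<longlonglongrightarrow> 0" and lim_lam: "lam \<longlonglongrightarrow> 0"
    and lim_\<beta>: "\<beta> \<longlonglongrightarrow> 0" and lim_\<alpha>: "\<alpha> \<longlonglongrightarrow> 0"
    and rng_\<theta>: "\<And>n. n \<ge> 1 \<Longrightarrow> 0 \<le> \<theta> n \<and> \<theta> n < 1"
    and rng_lam: "\<And>n. n \<ge> 1 \<Longrightarrow> 0 < lam n \<and> (\<forall>i\<in>{1..M}. lam n \<le> 2 * L i)"
    and rng_\<beta>: "\<And>n. n \<ge> 1 \<Longrightarrow> 0 < \<beta> n \<and> \<beta> n \<le> 1"
    and rng_\<alpha>: "\<And>n. n \<ge> 1 \<Longrightarrow> 0 < \<alpha> n \<and> \<alpha> n \<le> 1"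
    and C1: "\<not> summable \<alpha>"
    and C2: "(\<lambda>n. (1 / \<alpha> (Suc n)) * \<bar>1 / lam (Suc n) - 1 / lam n\<bar>) \<longlonglongrightarrow> 0"
    and C3: "(\<lambda>n. (1 / lam (Suc n)) * \<bar>1 - \<alpha> n / \<alpha> (Suc n)\<bar>) \<longlonglongrightarrow> 0"
    and C4: "(\<lambda>n. \<alpha> n / lam n) \<longlonglongrightarrow> 0"
    and C5: "(\<lambda>n. \<theta> n / (\<alpha> (Suc n) * lam (Suc n))) \<longlonglongrightarrow> 0"
    and C6: "\<sigma> \<ge> 1" "\<And>n. n \<ge> 1 \<Longrightarrow> lam n / lam (Suc n) \<le> \<sigma>"
    and C7: "(\<lambda>n. \<beta> n / \<alpha> (Suc n)) \<longlonglongrightarrow> 0"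
    and init_d: "\<And>i. i \<in> {1..M} \<Longrightarrow> d i 1 = - grad i (z 0)"
    and alg_z: "\<And>n. n \<ge> 1 \<Longrightarrow> z n = x n + \<theta> n *\<^sub>R (x n - x (n - 1))"
    and alg_d: "\<And>i n. i \<in> {1..M} \<Longrightarrow> n \<ge> 1 \<Longrightarrow>
                  d i (Suc n) = - grad i (z n) + \<beta> n *\<^sub>R d i n"
    and alg_y: "\<And>i n. i \<in> {1..M} \<Longrightarrow> n \<ge> 1 \<Longrightarrow>
                  y i n = prox (lam n) (f i) (z n + lam n *\<^sub>R d i (Suc n))"
    and alg_w: "\<And>i n. i \<in> {1..M} \<Longrightarrow> n \<ge> 1 \<Longrightarrow>
                  w i n = \<alpha> n *\<^sub>R u i + (1 - \<alpha> n) *\<^sub>R T i (y i n)"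
    and alg_x: "\<And>n. n \<ge> 1 \<Longrightarrow> x (Suc n) = (1 / real M) *\<^sub>R (\<Sum>i\<in>{1..M}. w i n)"
    and bdd_y: "\<And>i. i \<in> {1..M} \<Longrightarrow> bounded ((\<lambda>n. y i n) ` {1..})"
  shows "\<forall>i\<in>{1..M}.
           (\<lambda>n. norm (z n - y i n)) \<longlonglongrightarrow> 0 \<and>
           (\<lambda>n. norm (x n - y i n)) \<longlonglongrightarrow> 0 \<and>
           (\<lambda>n. norm (T i (x n) - x n)) \<longlonglongrightarrow> 0"
proof -
  let ?I = "{1..M}"
  have finI: "finite ?I" by simp
  have cardI: "card ?I = M" by simp
  have Mpos: "real M > 0" using M by simp
  obtain p where p: "\<And>i. i \<in> ?I \<Longrightarrow> T i p = p" using A4_S by blast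
  have sp: "(\<Sum>j\<in>?I. p) = real M *\<^sub>R p" using sum_constant_scaleR[of p ?I] by simp
  have ne: "norm (T i a - T i b) \<le> norm (a - b)" if i: "i \<in> ?I" for i a b
  proof -
    have "(norm (T i a - T i b))\<^sup>2 \<le> inner (T i a - T i b) (a - b)"
      using A3[OF i] unfolding firmly_nonexpansive_def by blast
    also have "\<dots> \<le> norm (T i a - T i b) * norm (a - b)" by (rule norm_cauchy_schwarz)
    finally have "norm (T i a - T i b) * norm (T i a - T i b) \<le> norm (T i a - T i b) * norm (a - b)"
      by (simp add: power2_eq_square)
    then show ?thesis by (cases "T i a = T i b") auto
  qed
  have fne: "(norm (T i a - p))\<^sup>2 \<le> (norm (a - p))\<^sup>2 - (norm (T i a - a))\<^sup>2" if i: "i \<in> ?I" for i a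
  proof -
    have h: "(norm (T i a - p))\<^sup>2 \<le> inner (T i a - p) (a - p)"
      using A3[OF i] p[OF i] unfolding firmly_nonexpansive_def by metis
    have "T i a - a = (T i a - p) - (a - p)" by simp
    then have "(norm (T i a - a))\<^sup>2 = (norm (T i a - p))\<^sup>2 - 2 * inner (T i a - p) (a - p) + (norm (a - p))\<^sup>2"
      using norm_diff_scale_sq[of "T i a - p" 1 "a - p"] by simp
    then show ?thesis using h by linarith
  qed
  have Tp: "norm (T i a - p) \<le> norm (a - p)" if "i \<in> ?I" for i a
    using ne[OF that, of a p] p[OF that] by simp
  obtain Y where Y: "\<And>i n. i \<in> ?I \<Longrightarrow> n \<ge> 1 \<Longrightarrow> norm (y i n) \<le> Y"
  proof -
    have "\<exists>B. \<forall>i\<in>?I. \<forall>n\<in>{1..}. norm (y i n) \<le> B"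
      by (rule fin_bound[OF finI]) (use bdd_y in \<open>auto simp: bounded_iff\<close>)
    then obtain B0 where B0: "\<forall>i\<in>?I. \<forall>n\<in>{1..}. norm (y i n) \<le> B0" by blast
    show ?thesis by (rule that[of B0]) (use B0 in auto)
  qed
  have Y0: "Y \<ge> 0" using Y[of 1 1] M by (meson atLeastAtMost_iff le_numeral_extra(4) norm_ge_zero order_trans)
  define U where "U = (\<Sum>i\<in>?I. norm (u i))"
  have U: "norm (u i) \<le> U" if "i \<in> ?I" for i
    unfolding U_def using that by (intro member_le_sum) auto
  have U0: "U \<ge> 0" unfolding U_def by (simp add: sum_nonneg)
  define TYB where "TYB = Y + 2 * norm p"
  have TY: "norm (T i (y i n)) \<le> TYB" if "i \<in> ?I" "n \<ge> 1" for i n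
  proof -
    have "norm (T i (y i n) - p) \<le> norm (y i n - p)" by (rule Tp[OF that(1)])
    also have "\<dots> \<le> Y + norm p" using Y[OF that] norm_triangle_ineq4[of "y i n" p] by linarith
    finally show ?thesis unfolding TYB_def using norm_triangle_ineq2[of "T i (y i n)" p] by linarith
  qed
  have TYB0: "TYB \<ge> 0" using Y0 by (simp add: TYB_def)
  define KW where "KW = U + TYB"
  have KW0: "KW \<ge> 0" using U0 TYB0 by (simp add: KW_def)
  have wB: "norm (w i n) \<le> KW" if i: "i \<in> ?I" and n: "n \<ge> 1" for i n
  proof -
    have a: "0 < \<alpha> n" "\<alpha> n \<le> 1" using rng_\<alpha>[OF n] by auto
    have "norm (w i n) \<le> norm (\<alpha> n *\<^sub>R u i) + norm ((1 - \<alpha> n) *\<^sub>R T i (y i n))"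
      unfolding alg_w[OF i n] by (rule norm_triangle_ineq)
    also have "\<dots> = \<alpha> n * norm (u i) + (1 - \<alpha> n) * norm (T i (y i n))" using a by simp
    also have "\<dots> \<le> 1 * U + 1 * TYB"
      using a U[OF i] TY[OF i n] U0 TYB0 by (intro add_mono mult_mono) auto
    finally show ?thesis by (simp add: KW_def)
  qed
  have xS: "norm (x (Suc n)) \<le> KW" if n: "n \<ge> 1" for n
  proof -
    have "norm (x (Suc n)) = (1 / real M) * norm (\<Sum>i\<in>?I. w i n)" using alg_x[OF n] by simp
    also have "\<dots> \<le> (1 / real M) * (\<Sum>i\<in>?I. norm (w i n))"
      using Mpos by (intro mult_left_mono norm_sum) auto
    also have "\<dots> \<le> (1 / real M) * (real (card ?I) * KW)"
      using Mpos wB n by (intro mult_left_mono sum_bounded_above) auto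
    also have "\<dots> = KW" using Mpos by simp
    finally show ?thesis .
  qed
  define XB where "XB = max KW (max (norm (x 0)) (norm (x 1)))"
  have XB: "norm (x n) \<le> XB" for n
  proof (cases "n \<le> 1")
    case True then have "n = 0 \<or> n = 1" by auto
    then show ?thesis by (auto simp: XB_def)
  next
    case False then obtain m where "n = Suc m" "m \<ge> 1" by (cases n) auto
    then show ?thesis using xS[of m] by (simp add: XB_def)
  qed
  have XB0: "XB \<ge> 0" using XB[of 0] norm_ge_zero order_trans by blast
  have xd: "norm (x n - x m) \<le> 2 * XB" for n m
    using norm_triangle_ineq4[of "x n" "x m"] XB[of n] XB[of m] by linarith
  have zx: "norm (z n - x n) \<le> norm (x n - x (n - 1))" if n: "n \<ge> 1" for n
  proof -
    have "norm (z n - x n) = \<theta> n * norm (x n - x (n - 1))" using alg_z[OF n] rng_\<theta>[OF n] by simp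
    also have "\<dots> \<le> 1 * norm (x n - x (n - 1))" using rng_\<theta>[OF n] by (intro mult_right_mono) auto
    finally show ?thesis by simp
  qed
  have zB: "norm (z n) \<le> 3 * XB" if n: "n \<ge> 1" for n
    using zx[OF n] xd[of n "n - 1"] XB[of n] norm_triangle_ineq2[of "z n" "x n"] by linarith
  obtain GB where GB: "\<And>i n. i \<in> ?I \<Longrightarrow> n \<ge> 1 \<Longrightarrow> norm (grad i (z n)) \<le> GB"
  proof -
    have "\<exists>B. \<forall>i\<in>?I. \<forall>n\<in>{1..}. norm (grad i (z n)) \<le> B"
    proof (rule fin_bound[OF finI])
      fix i assume i: "i \<in> ?I"
      have "norm (grad i (z n)) \<le> norm (grad i 0) + (1 / L i) * (3 * XB)" if "n \<in> {1..}" for n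
      proof -
        have "norm (grad i (z n) - grad i 0) \<le> (1 / L i) * norm (z n - 0)" by (rule A2_lip[OF i])
        also have "\<dots> \<le> (1 / L i) * (3 * XB)" using zB[of n] that A2_L[OF i] by (intro mult_left_mono) auto
        finally show ?thesis using norm_triangle_ineq2[of "grad i (z n)" "grad i 0"] by linarith
      qed
      then show "\<exists>B. \<forall>n\<in>{1..}. norm (grad i (z n)) \<le> B" by blast
    qed
    then obtain B0 where B0: "\<forall>i\<in>?I. \<forall>n\<in>{1..}. norm (grad i (z n)) \<le> B0" by blast
    show ?thesis by (rule that[of B0]) (use B0 in auto)
  qed
  have GB0: "GB \<ge> 0" using GB[of 1 1] M by (meson atLeastAtMost_iff le_numeral_extra(4) norm_ge_zero order_trans)
  obtain Nb where Nb: "\<And>n. n \<ge> Nb \<Longrightarrow> \<beta> n \<le> 1/2"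
  proof -
    obtain no where "\<forall>n\<ge>no. norm (\<beta> n - 0) < 1/2" using LIMSEQ_D[OF lim_\<beta>, of "1/2"] by auto
    then show ?thesis using that by fastforce
  qed
  define N1 where "N1 = max Nb 1"
  obtain DB where DB: "\<And>i n. i \<in> ?I \<Longrightarrow> n \<ge> N1 \<Longrightarrow> norm (d i n) \<le> DB"
  proof -
    have "\<exists>B. \<forall>i\<in>?I. \<forall>n\<in>{N1..}. norm (d i n) \<le> B"
    proof (rule fin_bound[OF finI])
      fix i assume i: "i \<in> ?I"
      have "norm (d i n) \<le> max (norm (d i N1)) (2 * GB)" if "n \<in> {N1..}" for n
      proof (rule rec_bound[where \<beta> = \<beta>])
        fix k assume k: "k \<ge> N1"
        then have k1: "k \<ge> 1" by (simp add: N1_def)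
        have "norm (d i (Suc k)) \<le> norm (grad i (z k)) + norm (\<beta> k *\<^sub>R d i k)"
          unfolding alg_d[OF i k1] using norm_triangle_ineq[of "- grad i (z k)" "\<beta> k *\<^sub>R d i k"] by (simp only: norm_minus_cancel)
        also have "\<dots> \<le> GB + \<beta> k * norm (d i k)" using GB[OF i k1] rng_\<beta>[OF k1] by simp
        finally show "norm (d i (Suc k)) \<le> GB + \<beta> k * norm (d i k)" .
        show "0 \<le> \<beta> k \<and> \<beta> k \<le> 1/2" using rng_\<beta>[OF k1] Nb[of k] k by (simp add: N1_def)
      qed (use that GB0 in auto)
      then show "\<exists>B. \<forall>n\<in>{N1..}. norm (d i n) \<le> B" by blast
    qed
    then obtain B0 where B0: "\<forall>i\<in>?I. \<forall>n\<in>{N1..}. norm (d i n) \<le> B0" by blast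
    show ?thesis by (rule that[of B0]) (use B0 in auto)
  qed
  have DB0: "DB \<ge> 0" using DB[of 1 N1] M by (meson atLeastAtMost_iff le_numeral_extra(4) norm_ge_zero order_trans order_refl)
  define Lmin where "Lmin = Min (L ` ?I)"
  have Lmin: "Lmin > 0" unfolding Lmin_def using M A2_L by (subst Min_gr_iff) auto
  have LminL: "Lmin \<le> L i" if "i \<in> ?I" for i unfolding Lmin_def using that by simp
  obtain Nl where Nl: "\<And>n. n \<ge> Nl \<Longrightarrow> lam n \<le> Lmin"
  proof -
    obtain no where "\<forall>n\<ge>no. norm (lam n - 0) < Lmin" using LIMSEQ_D[OF lim_lam Lmin] by auto
    then show ?thesis using that by fastforce
  qed
  define N where "N = max N1 Nl + 1"
  have N1N: "n \<ge> N \<Longrightarrow> n \<ge> N1" "n \<ge> N \<Longrightarrow> n \<ge> Nl" "n \<ge> N \<Longrightarrow> n \<ge> 1" "n \<ge> N \<Longrightarrow> n - 1 \<ge> N1" for n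
    by (auto simp: N_def N1_def)
  define v where "v = (\<lambda>i n. z n + lam n *\<^sub>R d i (Suc n))"
  have VI: "inner (v i n - y i n) (q - y i n) \<le> lam n * (f i q - f i (y i n))"
    if i: "i \<in> ?I" and n: "n \<ge> 1" for i n q
  proof -
    have "y i n = prox (lam n) (f i) (v i n)" using alg_y[OF i n] by (simp add: v_def)
    then show ?thesis using prox_VI[of "f i" "lam n" "v i n" q] A1[OF i] rng_lam[OF n] by simp
  qed
  define VB where "VB = 3 * XB + Lmin * DB + Y"
  have VB0: "VB \<ge> 0" unfolding VB_def using XB0 Lmin DB0 Y0
    by (intro add_nonneg_nonneg mult_nonneg_nonneg) auto
  have VB: "norm (v i n - y i n) \<le> VB" if i: "i \<in> ?I" and n: "n \<ge> N" for i n
  proof -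
    have n1: "n \<ge> 1" using N1N n by auto
    have t: "norm (v i n - y i n) \<le> norm (z n) + norm (lam n *\<^sub>R d i (Suc n)) + norm (y i n)"
      unfolding v_def by (smt (verit) norm_triangle_ineq norm_triangle_ineq4)
    have e: "norm (lam n *\<^sub>R d i (Suc n)) = lam n * norm (d i (Suc n))" using rng_lam[OF n1] by simp
    have "lam n * norm (d i (Suc n)) \<le> Lmin * DB"
      using Nl[of n] N1N[of n] n DB[OF i, of "Suc n"] rng_lam[OF n1] DB0 by (intro mult_mono) auto
    then show ?thesis using t e zB[OF n1] Y[OF i n1] unfolding VB_def by linarith
  qed
  define RR where "RR = (\<lambda>m. \<bar>\<alpha> (Suc m) - \<alpha> m\<bar> * KW + 4 * XB * \<theta> m + lam (Suc m) * \<beta> m * DB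
      + lam m * \<beta> m * DB + \<bar>lam (Suc m) - lam m\<bar> * GB + \<bar>1 - lam (Suc m) / lam m\<bar> * VB)"
  have wdiff: "norm (w i (Suc m) - w i m) \<le> (1 - \<alpha> (Suc m)) * norm (x (Suc m) - x m) + RR m"
    if i: "i \<in> ?I" and m: "m \<ge> N" for i m
  proof -
    have m1: "m \<ge> 1" and n1: "Suc m \<ge> 1" using N1N[OF m] by auto
    have thS: "\<theta> (Suc m) \<le> \<theta> m" "0 \<le> \<theta> (Suc m)" using dec_\<theta>[OF m1] rng_\<theta>[OF n1] by auto
    have bm: "\<beta> (Suc m) \<le> \<beta> m" "0 \<le> \<beta> (Suc m)" using dec_\<beta>[OF m1] rng_\<beta>[OF n1] by auto
    have lp: "0 < lam (Suc m)" "0 < lam m" using rng_lam[OF n1] rng_lam[OF m1] by auto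
    have ap: "0 < \<alpha> (Suc m)" "\<alpha> (Suc m) \<le> 1" using rng_\<alpha>[OF n1] by auto
    have za: "norm (z (Suc m) - z m) \<le> norm (x (Suc m) - x m) + 4 * XB * \<theta> m"
    proof -
      have "z (Suc m) - z m = (x (Suc m) - x m) + \<theta> (Suc m) *\<^sub>R (x (Suc m) - x m) - \<theta> m *\<^sub>R (x m - x (m - 1))"
        using alg_z[OF n1] alg_z[OF m1] by (simp add: algebra_simps)
      then have "norm (z (Suc m) - z m) \<le> norm (x (Suc m) - x m) + \<theta> (Suc m) * norm (x (Suc m) - x m) + \<theta> m * norm (x m - x (m - 1))"
        using thS rng_\<theta>[OF m1] by (smt (verit) norm_scaleR norm_triangle_ineq norm_triangle_ineq4 abs_of_nonneg)
      moreover have "\<theta> (Suc m) * norm (x (Suc m) - x m) \<le> \<theta> m * (2 * XB)"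
        using thS xd[of "Suc m" m] by (intro mult_mono) auto
      moreover have "\<theta> m * norm (x m - x (m - 1)) \<le> \<theta> m * (2 * XB)"
        using rng_\<theta>[OF m1] xd[of m "m - 1"] by (intro mult_left_mono) auto
      moreover have "\<theta> m * (2 * XB) + \<theta> m * (2 * XB) = 4 * XB * \<theta> m" by (simp add: algebra_simps)
      ultimately show ?thesis by linarith
    qed
    have vb: "norm (v i (Suc m) - v i m) \<le> norm (z (Suc m) - z m) + lam (Suc m) * \<beta> m * DB
        + \<bar>lam (Suc m) - lam m\<bar> * GB + lam m * \<beta> m * DB"
    proof -
      let ?g = "grad i"
      define A where "A = (z (Suc m) - lam (Suc m) *\<^sub>R ?g (z (Suc m))) - (z m - lam (Suc m) *\<^sub>R ?g (z m))"
      have eq: "v i (Suc m) - v i m = A + (lam (Suc m) * \<beta> (Suc m)) *\<^sub>R d i (Suc m)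
          - (lam (Suc m) - lam m) *\<^sub>R ?g (z m) - (lam m * \<beta> m) *\<^sub>R d i m"
        unfolding v_def A_def alg_d[OF i n1] alg_d[OF i m1] by (simp add: algebra_simps)
      have nA: "norm A \<le> norm (z (Suc m) - z m)" unfolding A_def
      proof (rule fb_nonexp[where h = "h i" and L = "L i"])
        show "convex_on UNIV (h i)" by (rule A2_convex[OF i])
        show "\<And>v. (h i has_derivative (\<lambda>t. inner (grad i v) t)) (at v)" by (rule A2_grad[OF i])
        show "\<And>a b. norm (grad i a - grad i b) \<le> 1 / L i * norm (a - b)" by (rule A2_lip[OF i])
        show "0 < L i" by (rule A2_L[OF i])
        show "0 \<le> lam (Suc m)" using lp by simp
        show "lam (Suc m) \<le> L i" using Nl[of "Suc m"] N1N[OF m] LminL[OF i] by simp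
      qed
      have d1: "norm ((lam (Suc m) * \<beta> (Suc m)) *\<^sub>R d i (Suc m)) \<le> lam (Suc m) * \<beta> m * DB"
      proof -
        have "norm ((lam (Suc m) * \<beta> (Suc m)) *\<^sub>R d i (Suc m)) = lam (Suc m) * \<beta> (Suc m) * norm (d i (Suc m))"
          using lp bm by simp
        also have "\<dots> \<le> lam (Suc m) * \<beta> m * DB"
          using lp bm DB[OF i, of "Suc m"] N1N[OF m] by (intro mult_mono) (auto intro: mult_left_mono)
        finally show ?thesis .
      qed
      have d2: "norm ((lam (Suc m) - lam m) *\<^sub>R ?g (z m)) \<le> \<bar>lam (Suc m) - lam m\<bar> * GB"
        using GB[OF i m1] by (simp add: mult_left_mono)
      have d3: "norm ((lam m * \<beta> m) *\<^sub>R d i m) \<le> lam m * \<beta> m * DB"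
      proof -
        have "norm ((lam m * \<beta> m) *\<^sub>R d i m) = lam m * \<beta> m * norm (d i m)"
          using lp rng_\<beta>[OF m1] by simp
        also have "\<dots> \<le> lam m * \<beta> m * DB"
          using lp rng_\<beta>[OF m1] DB[OF i, of m] N1N[OF m] by (intro mult_left_mono) auto
        finally show ?thesis .
      qed
      show ?thesis unfolding eq using nA d1 d2 d3
        by (smt (verit) norm_triangle_ineq norm_triangle_ineq4)
    qed
    have yc: "norm (y i (Suc m) - y i m) \<le> norm (v i (Suc m) - v i m) + \<bar>1 - lam (Suc m) / lam m\<bar> * VB"
    proof -
      have "norm (y i (Suc m) - y i m) \<le> norm (v i (Suc m) - v i m) + \<bar>1 - lam (Suc m) / lam m\<bar> * norm (v i m - y i m)"
        by (rule prox_diff[OF lp VI[OF i n1] VI[OF i m1]])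
      moreover have "\<bar>1 - lam (Suc m) / lam m\<bar> * norm (v i m - y i m) \<le> \<bar>1 - lam (Suc m) / lam m\<bar> * VB"
        using VB[OF i m] by (intro mult_left_mono) auto
      ultimately show ?thesis by linarith
    qed
    have wd: "norm (w i (Suc m) - w i m) \<le> \<bar>\<alpha> (Suc m) - \<alpha> m\<bar> * KW + (1 - \<alpha> (Suc m)) * norm (y i (Suc m) - y i m)"
    proof -
      have eq: "w i (Suc m) - w i m = (\<alpha> (Suc m) - \<alpha> m) *\<^sub>R u i + (1 - \<alpha> (Suc m)) *\<^sub>R (T i (y i (Suc m)) - T i (y i m))
          + (\<alpha> m - \<alpha> (Suc m)) *\<^sub>R T i (y i m)"
        using alg_w[OF i n1] alg_w[OF i m1] by (simp add: algebra_simps)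
      have "norm (w i (Suc m) - w i m) \<le> \<bar>\<alpha> (Suc m) - \<alpha> m\<bar> * norm (u i) + (1 - \<alpha> (Suc m)) * norm (T i (y i (Suc m)) - T i (y i m))
          + \<bar>\<alpha> m - \<alpha> (Suc m)\<bar> * norm (T i (y i m))"
        unfolding eq using ap by (smt (verit) norm_scaleR norm_triangle_ineq abs_of_nonneg)
      moreover have "(1 - \<alpha> (Suc m)) * norm (T i (y i (Suc m)) - T i (y i m)) \<le> (1 - \<alpha> (Suc m)) * norm (y i (Suc m) - y i m)"
        using ne[OF i] ap by (intro mult_left_mono) auto
      moreover have "\<bar>\<alpha> (Suc m) - \<alpha> m\<bar> * norm (u i) \<le> \<bar>\<alpha> (Suc m) - \<alpha> m\<bar> * U"
        using U[OF i] by (intro mult_left_mono) auto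
      moreover have "\<bar>\<alpha> m - \<alpha> (Suc m)\<bar> * norm (T i (y i m)) \<le> \<bar>\<alpha> (Suc m) - \<alpha> m\<bar> * TYB"
        using TY[OF i m1] by (simp add: abs_minus_commute mult_left_mono)
      ultimately show ?thesis by (simp add: KW_def algebra_simps)
    qed
    have "(1 - \<alpha> (Suc m)) * norm (y i (Suc m) - y i m) \<le> (1 - \<alpha> (Suc m)) * (norm (x (Suc m) - x m) + (4 * XB * \<theta> m + lam (Suc m) * \<beta> m * DB
        + \<bar>lam (Suc m) - lam m\<bar> * GB + lam m * \<beta> m * DB + \<bar>1 - lam (Suc m) / lam m\<bar> * VB))"
      using za vb yc ap by (intro mult_left_mono) auto
    also have "\<dots> \<le> (1 - \<alpha> (Suc m)) * norm (x (Suc m) - x m) + (4 * XB * \<theta> m + lam (Suc m) * \<beta> m * DB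
        + \<bar>lam (Suc m) - lam m\<bar> * GB + lam m * \<beta> m * DB + \<bar>1 - lam (Suc m) / lam m\<bar> * VB)"
    proof -
      have "0 \<le> 4 * XB * \<theta> m + lam (Suc m) * \<beta> m * DB
        + \<bar>lam (Suc m) - lam m\<bar> * GB + lam m * \<beta> m * DB + \<bar>1 - lam (Suc m) / lam m\<bar> * VB"
        using XB0 rng_\<theta>[OF m1] lp rng_\<beta>[OF m1] DB0 GB0 VB0
        by (intro add_nonneg_nonneg mult_nonneg_nonneg) auto
      then show ?thesis using ap by (rule sh)
    qed
    finally show ?thesis using wd by (simp add: RR_def)
  qed
  have xdiff: "norm (x (Suc (Suc m)) - x (Suc m)) \<le> (1 - \<alpha> (Suc m)) * norm (x (Suc m) - x m) + RR m"
    if m: "m \<ge> N" for m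
  proof -
    have m1: "m \<ge> 1" and n1: "Suc m \<ge> 1" using N1N[OF m] by auto
    have "x (Suc (Suc m)) - x (Suc m) = (1 / real M) *\<^sub>R (\<Sum>i\<in>?I. w i (Suc m) - w i m)"
      using alg_x[OF n1] alg_x[OF m1] by (simp add: sum_subtractf scaleR_diff_right)
    then have "norm (x (Suc (Suc m)) - x (Suc m)) = (1 / real M) * norm (\<Sum>i\<in>?I. w i (Suc m) - w i m)"
      by simp
    also have "\<dots> \<le> (1 / real M) * (\<Sum>i\<in>?I. norm (w i (Suc m) - w i m))"
      using Mpos by (intro mult_left_mono norm_sum) auto
    also have "\<dots> \<le> (1 / real M) * (real (card ?I) * ((1 - \<alpha> (Suc m)) * norm (x (Suc m) - x m) + RR m))"
      using Mpos wdiff m by (intro mult_left_mono sum_bounded_above) auto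
    also have "\<dots> = (1 - \<alpha> (Suc m)) * norm (x (Suc m) - x m) + RR m" using Mpos by simp
    finally show ?thesis .
  qed
  \<comment> \<open>Xu lemma gives asymptotic regularity\<close>
  define c2 where "c2 = (\<lambda>m. (1 / \<alpha> (Suc m)) * \<bar>1 / lam (Suc m) - 1 / lam m\<bar>)"
  define c3 where "c3 = (\<lambda>m. (1 / lam (Suc m)) * \<bar>1 - \<alpha> m / \<alpha> (Suc m)\<bar>)"
  define c5 where "c5 = (\<lambda>m. \<theta> m / (\<alpha> (Suc m) * lam (Suc m)))"
  define c7 where "c7 = (\<lambda>m. \<beta> m / \<alpha> (Suc m))"
  define b where "b = (\<lambda>m. KW * lam (Suc m) * c3 m + 4 * XB * lam (Suc m) * c5 m
      + DB * (lam (Suc m) + lam m) * c7 m + GB * lam (Suc m) * lam m * c2 m + VB * lam (Suc m) * c2 m)"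
  have RRb: "RR m = \<alpha> (Suc m) * b m" if m: "m \<ge> N" for m
  proof -
    have m1: "m \<ge> 1" and n1: "Suc m \<ge> 1" using N1N[OF m] by auto
    have lp: "0 < lam (Suc m)" "0 < lam m" using rng_lam[OF n1] rng_lam[OF m1] by auto
    have ap: "0 < \<alpha> (Suc m)" using rng_\<alpha>[OF n1] by auto
    have e3: "\<bar>\<alpha> (Suc m) - \<alpha> m\<bar> = \<alpha> (Suc m) * (lam (Suc m) * c3 m)"
    proof -
      have "1 - \<alpha> m / \<alpha> (Suc m) = (\<alpha> (Suc m) - \<alpha> m) / \<alpha> (Suc m)" using ap by (simp add: field_simps)
      then have "\<bar>1 - \<alpha> m / \<alpha> (Suc m)\<bar> = \<bar>\<alpha> (Suc m) - \<alpha> m\<bar> / \<alpha> (Suc m)" using ap by simp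
      then show ?thesis using ap lp by (simp add: c3_def)
    qed
    have e5: "\<theta> m = \<alpha> (Suc m) * (lam (Suc m) * c5 m)" using ap lp by (simp add: c5_def)
    have e7: "\<beta> m = \<alpha> (Suc m) * c7 m" using ap by (simp add: c7_def)
    have e2a: "\<bar>lam (Suc m) - lam m\<bar> = \<alpha> (Suc m) * (lam (Suc m) * lam m * c2 m)"
    proof -
      have "1 / lam (Suc m) - 1 / lam m = (lam m - lam (Suc m)) / (lam (Suc m) * lam m)" using lp by (simp add: field_simps)
      then have "\<bar>1 / lam (Suc m) - 1 / lam m\<bar> = \<bar>lam (Suc m) - lam m\<bar> / (lam (Suc m) * lam m)"
        using lp by (simp add: abs_minus_commute)
      then show ?thesis using ap lp by (simp add: c2_def)
    qed
    have e2b: "\<bar>1 - lam (Suc m) / lam m\<bar> = \<alpha> (Suc m) * (lam (Suc m) * c2 m)"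
    proof -
      have "1 / lam (Suc m) - 1 / lam m = (1 - lam (Suc m) / lam m) / lam (Suc m)" using lp by (simp add: field_simps)
      then have "\<bar>1 / lam (Suc m) - 1 / lam m\<bar> = \<bar>1 - lam (Suc m) / lam m\<bar> / lam (Suc m)"
        using lp by simp
      then show ?thesis using ap lp by (simp add: c2_def)
    qed
    show ?thesis unfolding RR_def b_def e3 e5 e2a e2b
      by (subst (1 2) e7) (simp add: algebra_simps)
  qed
  have bto: "b \<longlonglongrightarrow> 0"
  proof -
    have l1: "(\<lambda>m. lam (Suc m)) \<longlonglongrightarrow> 0" using LIMSEQ_Suc[OF lim_lam] .
    have "b \<longlonglongrightarrow> KW * 0 * 0 + 4 * XB * 0 * 0 + DB * (0 + 0) * 0 + GB * 0 * 0 * 0 + VB * 0 * 0"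
      unfolding b_def c2_def c3_def c5_def c7_def
      by (intro tendsto_intros l1 lim_lam C2 C3 C5 C7)
    then show ?thesis by simp
  qed
  have a0: "(\<lambda>m. norm (x (Suc m) - x m)) \<longlonglongrightarrow> 0"
  proof (rule xu[where \<alpha> = "\<lambda>m. \<alpha> (Suc m)" and b = b and Nz = N])
    show "\<And>n. N \<le> n \<Longrightarrow> 0 \<le> norm (x (Suc n) - x n)" by simp
    show "\<And>n. N \<le> n \<Longrightarrow> 0 \<le> \<alpha> (Suc n) \<and> \<alpha> (Suc n) \<le> 1" using rng_\<alpha> by (metis le_add1 plus_1_eq_Suc less_imp_le)
    show "\<not> summable (\<lambda>m. \<alpha> (Suc m))" using C1 summable_Suc_iff by blast
    show "\<And>n. N \<le> n \<Longrightarrow> norm (x (Suc (Suc n)) - x (Suc n)) \<le> (1 - \<alpha> (Suc n)) * norm (x (Suc n) - x n) + \<alpha> (Suc n) * b n"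
      using xdiff RRb by simp
    show "b \<longlonglongrightarrow> 0" by (rule bto)
  qed
  have a1: "(\<lambda>n. norm (x n - x (n - 1))) \<longlonglongrightarrow> 0"
    by (rule LIMSEQ_imp_Suc) (use a0 in simp)
  obtain FB where FB: "\<And>i n. i \<in> ?I \<Longrightarrow> n \<ge> 1 \<Longrightarrow> f i p - f i (y i n) \<le> FB"
  proof -
    have "\<exists>B. \<forall>i\<in>?I. \<forall>n\<in>{1..}. f i p - f i (y i n) \<le> B"
    proof (rule fin_bound[OF finI])
      fix i assume i: "i \<in> ?I"
      obtain A B where B: "B \<ge> 0" and AB: "\<And>y. f i y \<ge> A - B * norm y"
        using convex_lower_linear[of "f i"] A1[OF i] by blast
      have "f i p - f i (y i n) \<le> f i p - A + B * Y" if "n \<in> {1..}" for n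
        using AB[of "y i n"] Y[OF i, of n] that B mult_left_mono[of "norm (y i n)" Y B] by auto
      then show "\<exists>B. \<forall>n\<in>{1..}. f i p - f i (y i n) \<le> B" by blast
    qed
    then obtain B0 where B0: "\<forall>i\<in>?I. \<forall>n\<in>{1..}. f i p - f i (y i n) \<le> B0" by blast
    show ?thesis by (rule that[of B0]) (use B0 in auto)
  qed
  define FD where "FD = FB + DB * (Y + norm p)"
  define TP where "TP = Y + norm p"
  define K2 where "K2 = 2 * TP * KW + KW * KW"
  define ZP where "ZP = (3 * XB + norm p) + (XB + norm p)"
  define Q where "Q = (\<lambda>n. real M * ((norm (x (Suc n) - x n) + norm (x n - x (n - 1))) * ZP + 2 * lam n * FD + \<alpha> n * K2))"
  have key: "(norm (z n - y i n))\<^sup>2 + (norm (T i (y i n) - y i n))\<^sup>2 \<le> Q n" if i: "i \<in> ?I" and n: "n \<ge> N" for i n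
  proof -
    have n1: "n \<ge> 1" using N1N[OF n] by auto
    have lp: "0 < lam n" using rng_lam[OF n1] by auto
    have ap: "0 < \<alpha> n" "\<alpha> n \<le> 1" using rng_\<alpha>[OF n1] by auto
    have yp: "norm (y j n - p) \<le> TP" if j: "j \<in> ?I" for j
      using Y[OF j n1] norm_triangle_ineq4[of "y j n" p] by (simp add: TP_def)
    have s1: "(norm (y j n - p))\<^sup>2 \<le> (norm (z n - p))\<^sup>2 - (norm (z n - y j n))\<^sup>2 + 2 * lam n * FD" if j: "j \<in> ?I" for j
    proof -
      let ?d = "d j (Suc n)"
      have vi: "inner (v j n - y j n) (p - y j n) \<le> lam n * FB"
        using VI[OF j n1, of p] FB[OF j n1] lp by (smt (verit) mult_left_mono)
      have dd: "\<bar>inner ?d (y j n - p)\<bar> \<le> DB * (Y + norm p)"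
      proof -
        have "\<bar>inner ?d (y j n - p)\<bar> \<le> norm ?d * norm (y j n - p)" by (rule Cauchy_Schwarz_ineq2)
        also have "\<dots> \<le> DB * TP" using DB[OF j, of "Suc n"] N1N[OF n] yp[OF j] DB0 by (intro mult_mono) auto
        finally show ?thesis by (simp add: TP_def)
      qed
      have "inner (z n - y j n) (y j n - p) = - inner (v j n - y j n) (p - y j n) - lam n * inner ?d (y j n - p)"
        unfolding v_def by (simp add: inner_diff_left inner_diff_right inner_add_left algebra_simps)
      moreover have "lam n * inner ?d (y j n - p) \<le> lam n * (DB * (Y + norm p))"
        using dd lp by (intro mult_left_mono) auto
      ultimately have ip: "inner (z n - y j n) (y j n - p) \<ge> - lam n * FD"
        using vi by (simp add: FD_def algebra_simps)
      have "(norm (z n - p))\<^sup>2 = (norm (z n - y j n))\<^sup>2 + (norm (y j n - p))\<^sup>2 + 2 * inner (z n - y j n) (y j n - p)"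
      proof -
        have e: "(z n - y j n) + (y j n - p) = z n - p" by simp
        show ?thesis using norm_add_sq[of "z n - y j n" "y j n - p"] unfolding e .
      qed
      then show ?thesis using ip by linarith
    qed
    have s3: "(norm (w j n - p))\<^sup>2 \<le> (norm (T j (y j n) - p))\<^sup>2 + \<alpha> n * K2" if j: "j \<in> ?I" for j
    proof -
      have ew: "w j n - p = (T j (y j n) - p) + \<alpha> n *\<^sub>R (u j - T j (y j n))"
        using alg_w[OF j n1] by (simp add: algebra_simps)
      have e0: "(norm (w j n - p))\<^sup>2 = (norm (T j (y j n) - p))\<^sup>2 + (norm (\<alpha> n *\<^sub>R (u j - T j (y j n))))\<^sup>2
          + 2 * inner (T j (y j n) - p) (\<alpha> n *\<^sub>R (u j - T j (y j n)))"
        unfolding ew by (rule norm_add_sq)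
      have e1: "(norm (\<alpha> n *\<^sub>R (u j - T j (y j n))))\<^sup>2 = (\<alpha> n)\<^sup>2 * (norm (u j - T j (y j n)))\<^sup>2"
        using ap by (simp add: power_mult_distrib)
      have e2: "inner (T j (y j n) - p) (\<alpha> n *\<^sub>R (u j - T j (y j n))) = \<alpha> n * inner (T j (y j n) - p) (u j - T j (y j n))"
        by simp
      have e: "(norm (w j n - p))\<^sup>2 = (norm (T j (y j n) - p))\<^sup>2 + 2 * \<alpha> n * inner (T j (y j n) - p) (u j - T j (y j n))
          + (\<alpha> n)\<^sup>2 * (norm (u j - T j (y j n)))\<^sup>2"
        unfolding e0 e1 e2 by simp
      have ut: "norm (u j - T j (y j n)) \<le> KW"
        using U[OF j] TY[OF j n1] norm_triangle_ineq4[of "u j" "T j (y j n)"] by (simp add: KW_def)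
      have tp: "norm (T j (y j n) - p) \<le> TP" using Tp[OF j, of "y j n"] yp[OF j] by simp
      have "inner (T j (y j n) - p) (u j - T j (y j n)) \<le> TP * KW"
        using norm_cauchy_schwarz[of "T j (y j n) - p" "u j - T j (y j n)"] tp ut
        by (smt (verit) mult_mono norm_ge_zero)
      then have t1: "2 * \<alpha> n * inner (T j (y j n) - p) (u j - T j (y j n)) \<le> \<alpha> n * (2 * (TP * KW))"
        using ap by (intro sc2) auto
      have "(\<alpha> n)\<^sup>2 * (norm (u j - T j (y j n)))\<^sup>2 \<le> \<alpha> n * (KW * KW)"
      proof -
        have "norm (u j - T j (y j n)) * norm (u j - T j (y j n)) \<le> KW * KW"
          using ut KW0 by (intro mult_mono) auto
        then have "(norm (u j - T j (y j n)))\<^sup>2 \<le> KW * KW" by (simp add: power2_eq_square)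
        moreover have "(\<alpha> n)\<^sup>2 \<le> \<alpha> n" using ap by (simp add: power2_eq_square mult_left_le_one_le)
        ultimately show ?thesis using ap KW0 by (intro mult_mono) auto
      qed
      then show ?thesis using e t1 by (simp add: K2_def algebra_simps)
    qed
    have xs: "x (Suc n) - p = (1 / real M) *\<^sub>R (\<Sum>j\<in>?I. w j n - p)"
      using alg_x[OF n1] Mpos sp by (simp add: sum_subtractf scaleR_diff_right)
    have avg: "(norm (x (Suc n) - p))\<^sup>2 \<le> (1 / real M) * (\<Sum>j\<in>?I. (norm (w j n - p))\<^sup>2)"
      unfolding xs by (rule avg_sq) (use M in auto)
    have termj: "(norm (z n - y j n))\<^sup>2 + (norm (T j (y j n) - y j n))\<^sup>2 \<le> (norm (z n - p))\<^sup>2 - (norm (w j n - p))\<^sup>2 + 2 * lam n * FD + \<alpha> n * K2"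
      if j: "j \<in> ?I" for j
      using s1[OF j] s3[OF j] fne[OF j, of "y j n"] by linarith
    have "(norm (z n - y i n))\<^sup>2 + (norm (T i (y i n) - y i n))\<^sup>2 \<le> (\<Sum>j\<in>?I. (norm (z n - y j n))\<^sup>2 + (norm (T j (y j n) - y j n))\<^sup>2)"
      using i by (intro member_le_sum) auto
    also have "\<dots> \<le> (\<Sum>j\<in>?I. (norm (z n - p))\<^sup>2 - (norm (w j n - p))\<^sup>2 + 2 * lam n * FD + \<alpha> n * K2)"
      using termj by (intro sum_mono) auto
    also have "\<dots> = real M * ((norm (z n - p))\<^sup>2 + 2 * lam n * FD + \<alpha> n * K2) - (\<Sum>j\<in>?I. (norm (w j n - p))\<^sup>2)"
      by (simp add: sum.distrib sum_subtractf algebra_simps)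
    also have "\<dots> \<le> real M * ((norm (z n - p))\<^sup>2 + 2 * lam n * FD + \<alpha> n * K2) - real M * (norm (x (Suc n) - p))\<^sup>2"
      using avg Mpos by (simp add: field_simps)
    also have "\<dots> = real M * (((norm (z n - p))\<^sup>2 - (norm (x (Suc n) - p))\<^sup>2) + 2 * lam n * FD + \<alpha> n * K2)"
      by (simp add: algebra_simps)
    also have "\<dots> \<le> Q n"
    proof -
      have zp: "norm (z n - p) \<le> 3 * XB + norm p" using zB[OF n1] norm_triangle_ineq4[of "z n" p] by linarith
      have xp: "norm (x (Suc n) - p) \<le> XB + norm p" using XB[of "Suc n"] norm_triangle_ineq4[of "x (Suc n)" p] by linarith
      have zx': "norm (z n - x (Suc n)) \<le> norm (x (Suc n) - x n) + norm (x n - x (n - 1))"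
        using zx[OF n1] norm_triangle_ineq[of "z n - x n" "x n - x (Suc n)"] by (simp add: norm_minus_commute)
      have "(norm (z n - p))\<^sup>2 - (norm (x (Suc n) - p))\<^sup>2 = (norm (z n - p) - norm (x (Suc n) - p)) * (norm (z n - p) + norm (x (Suc n) - p))"
        by (simp add: power2_eq_square algebra_simps)
      also have "\<dots> \<le> norm (z n - x (Suc n)) * (norm (z n - p) + norm (x (Suc n) - p))"
      proof (rule mult_right_mono)
        show "norm (z n - p) - norm (x (Suc n) - p) \<le> norm (z n - x (Suc n))"
          using norm_triangle_ineq2[of "z n - p" "x (Suc n) - p"] by simp
      qed simp
      also have "\<dots> \<le> (norm (x (Suc n) - x n) + norm (x n - x (n - 1))) * ZP"
        using zx' zp xp unfolding ZP_def by (intro mult_mono) auto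
      finally show ?thesis using Mpos by (simp add: Q_def)
    qed
    finally show ?thesis .
  qed
  have Qto: "Q \<longlonglongrightarrow> 0"
  proof -
    have "Q \<longlonglongrightarrow> real M * ((0 + 0) * ZP + 2 * 0 * FD + 0 * K2)"
      unfolding Q_def by (intro tendsto_intros a0 a1 lim_lam lim_\<alpha>)
    then show ?thesis by simp
  qed
  have sQ: "(\<lambda>n. sqrt (Q n)) \<longlonglongrightarrow> 0" using tendsto_real_sqrt[OF Qto] by simp
  have zy: "norm (z n - y i n) \<le> sqrt (Q n)" and ty: "norm (T i (y i n) - y i n) \<le> sqrt (Q n)"
    if "i \<in> ?I" "n \<ge> N" for i n
  proof -
    have k: "(norm (z n - y i n))\<^sup>2 + (norm (T i (y i n) - y i n))\<^sup>2 \<le> Q n" by (rule key[OF that])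
    have "(norm (z n - y i n))\<^sup>2 \<le> Q n" using k zero_le_power2[of "norm (T i (y i n) - y i n)"] by linarith
    then show "norm (z n - y i n) \<le> sqrt (Q n)" by (rule real_le_rsqrt)
    have "(norm (T i (y i n) - y i n))\<^sup>2 \<le> Q n" using k zero_le_power2[of "norm (z n - y i n)"] by linarith
    then show "norm (T i (y i n) - y i n) \<le> sqrt (Q n)" by (rule real_le_rsqrt)
  qed
  show ?thesis
  proof (intro ballI conjI)
    fix i assume i: "i \<in> ?I"
    have ev: "eventually (\<lambda>n. n \<ge> N) sequentially" by (rule eventually_ge_at_top)
    show l1: "(\<lambda>n. norm (z n - y i n)) \<longlonglongrightarrow> 0"
      by (rule tendsto_sandwich[of "\<lambda>n. 0" _ _ "\<lambda>n. sqrt (Q n)"])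
         (simp, rule eventually_mono[OF ev], rule zy[OF i], assumption, rule tendsto_const, rule sQ)
    have xy: "norm (x n - y i n) \<le> norm (x n - x (n - 1)) + sqrt (Q n)" if n: "n \<ge> N" for n
    proof -
      have n1: "n \<ge> 1" using N1N[OF n] by auto
      have "norm (x n - y i n) \<le> norm (x n - z n) + norm (z n - y i n)" by (rule norm_diff_triangle_le[of _ "z n"]) simp_all
      then show ?thesis using zx[OF n1] zy[OF i n] by (simp add: norm_minus_commute)
    qed
    have s2: "(\<lambda>n. norm (x n - x (n - 1)) + sqrt (Q n)) \<longlonglongrightarrow> 0"
      using tendsto_add[OF a1 sQ] by simp
    show "(\<lambda>n. norm (x n - y i n)) \<longlonglongrightarrow> 0"
      by (rule tendsto_sandwich[of "\<lambda>n. 0" _ _ "\<lambda>n. norm (x n - x (n - 1)) + sqrt (Q n)"])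
         (simp, rule eventually_mono[OF ev], rule xy, assumption, rule tendsto_const, rule s2)
    have tx: "norm (T i (x n) - x n) \<le> 2 * (norm (x n - x (n - 1)) + sqrt (Q n)) + sqrt (Q n)" if n: "n \<ge> N" for n
    proof -
      have t1: "norm (T i (x n) - x n) \<le> norm (T i (x n) - T i (y i n)) + norm (T i (y i n) - x n)"
        by (rule norm_diff_triangle_le[of _ "T i (y i n)"]) simp_all
      have t2: "norm (T i (y i n) - x n) \<le> norm (T i (y i n) - y i n) + norm (y i n - x n)"
        by (rule norm_diff_triangle_le[of _ "y i n"]) simp_all
      have t3: "norm (T i (x n) - T i (y i n)) \<le> norm (x n - y i n)" by (rule ne[OF i])
      have t4: "norm (y i n - x n) = norm (x n - y i n)" by (rule norm_minus_commute)
      show ?thesis using t1 t2 t3 t4 xy[OF n] ty[OF i n] by argo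
    qed
    have s3: "(\<lambda>n. 2 * (norm (x n - x (n - 1)) + sqrt (Q n)) + sqrt (Q n)) \<longlonglongrightarrow> 0"
      using tendsto_add[OF tendsto_mult_right_zero[OF s2, of 2] sQ] by (simp add: mult.commute)
    show "(\<lambda>n. norm (T i (x n) - x n)) \<longlonglongrightarrow> 0"
      by (rule tendsto_sandwich[of "\<lambda>n. 0" _ _ "\<lambda>n. 2 * (norm (x n - x (n - 1)) + sqrt (Q n)) + sqrt (Q n)"])
         (simp, rule eventually_mono[OF ev], rule tx, assumption, rule tendsto_const, rule s3)
  qed
qed


end
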